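(* Let $\pi_1,\pi_2\in\mathcal{P}(\mathcal{X})$ and $M\ge1$. Then for every $\mu_1\in\mathcal{N}(\pi_1,M)$ there exists $\mu_2\in\mathcal{N}(\pi_2,M)$ such that $\|\mu_1-\mu_2\|_{TV}\le M\|\pi_1-\pi_2\|_{TV}$.
   Context: $\mathcal{P}(\mathcal{X})$ is the set of probability distributions on a measurable space $\mathcal{X}$; $\|\mu-\nu\|_{TV}=\sup_A|\mu(A)-\nu(A)|$; $\mathcal{N}(\pi,M)=\{\mu\in\mathcal{P}(\mathcal{X}):\mu(A)\le M\pi(A)\text{ for all measurable }A\}$. *)

theory Defs
  imports "HOL-Probability.Probability"
begin

text \<open>The measurable space \<open>\<X>\<close> is represented by a measure \<open>X\<close>; only its
  space and sigma-algebra are used.\<close>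

definition prob_measures :: "'a measure \<Rightarrow> 'a measure set" where
  "prob_measures X = {\<mu>. prob_space \<mu> \<and> sets \<mu> = sets X}"

definition tv_dist :: "'a measure \<Rightarrow> 'a measure \<Rightarrow> 'a measure \<Rightarrow> real" where
  "tv_dist X \<mu> \<nu> = (SUP A \<in> sets X. \<bar>measure \<mu> A - measure \<nu> A\<bar>)"

definition N_set :: "'a measure \<Rightarrow> 'a measure \<Rightarrow> real \<Rightarrow> 'a measure set" where
  "N_set X \<pi> M = {\<mu> \<in> prob_measures X. \<forall>A \<in> sets X. measure \<mu> A \<le> M * measure \<pi> A}"

end

theory Submission
  imports Defs
begin

lemma dens_real:
  fixes R N :: "'a measure"
  assumes "finite_measure R" "prob_space N" "absolutely_continuous R N" "sets N = sets R"
  shows "\<exists>m. m \<in> borel_measurable R \<and> (\<forall>x. 0 \<le> m x) \<and> integrable R m \<and>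
     density R (\<lambda>x. ennreal (m x)) = N \<and>
     (\<forall>A \<in> sets R. measure N A = (\<integral>x. m x * indicator A x \<partial>R))"
proof -
  interpret R: finite_measure R by fact
  interpret N: prob_space N by fact
  define f where "f = RN_deriv R N"
  have fm[measurable]: "f \<in> borel_measurable R" unfolding f_def by simp
  have df: "density R f = N" unfolding f_def using R.density_RN_deriv assms by blast
  have fin: "AE x in R. f x \<noteq> \<infinity>" unfolding f_def
    using R.RN_deriv_finite[of N] assms N.sigma_finite_measure_axioms by blast
  define m where "m x = enn2real (f x)" for x
  have mm[measurable]: "m \<in> borel_measurable R" unfolding m_def by simp
  have dm: "density R (\<lambda>x. ennreal (m x)) = N"
    unfolding df[symmetric] m_def
    by (rule density_cong) (use fin in \<open>auto elim!: eventually_mono simp: less_top[symmetric]\<close>)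
  have "integrable (density R (\<lambda>x. ennreal (m x))) (\<lambda>_. 1::real)"
    unfolding dm by simp
  then have im: "integrable R m"
    by (subst (asm) integrable_density) (auto simp: m_def[abs_def])
  have "measure N A = (\<integral>x. m x * indicator A x \<partial>R)" if A: "A \<in> sets R" for A
  proof -
    have "measure N A = integral\<^sup>L N (indicator A)"
      using A assms(4) by (simp add: N.emeasure_eq_measure)
    also have "\<dots> = integral\<^sup>L (density R (\<lambda>x. ennreal (m x))) (indicator A)"
      using dm by simp
    also have "\<dots> = (\<integral>x. m x * indicator A x \<partial>R)"
      by (subst integral_density) (use A in \<open>auto simp: m_def\<close>)
    finally show ?thesis .
  qed
  then show ?thesis using mm im dm by (intro exI[of _ m]) (auto simp: m_def)
qed


lemma sum_meas:
  fixes X A B :: "'a measure"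
  assumes "finite_measure A" "finite_measure B" "sets A = sets X" "sets B = sets X"
  defines "R \<equiv> measure_of (space X) (sets X) (\<lambda>S. emeasure A S + emeasure B S)"
  shows "finite_measure R" "sets R = sets X" "absolutely_continuous R A" "absolutely_continuous R B"
proof -
  interpret A: finite_measure A by fact
  interpret B: finite_measure B by fact
  have sp: "space A = space X" "space B = space X" using assms(3,4) sets_eq_imp_space_eq by blast+
  show sR: "sets R = sets X" unfolding R_def by (simp add: sets.space_closed)
  have eR: "emeasure R S = emeasure A S + emeasure B S" if "S \<in> sets X" for S
    unfolding R_def
  proof (rule emeasure_measure_of_sigma[OF sets.sigma_algebra_axioms _ _ that])
    show "positive (sets X) (\<lambda>S. emeasure A S + emeasure B S)"
      by (simp add: positive_def)
    show "countably_additive (sets X) (\<lambda>S. emeasure A S + emeasure B S)"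
    proof (rule countably_additiveI)
      fix F :: "nat \<Rightarrow> _" assume F: "range F \<subseteq> sets X" "disjoint_family F"
      then show "(\<Sum>i. emeasure A (F i) + emeasure B (F i)) = emeasure A (\<Union>i. F i) + emeasure B (\<Union>i. F i)"
        using assms(3,4) by (simp add: suminf_add[symmetric] suminf_emeasure)
    qed
  qed
  have "space R = space X" using sets_eq_imp_space_eq[OF sR] .
  moreover have "emeasure R (space X) = emeasure A (space A) + emeasure B (space B)"
    using eR[of "space X"] sp by simp
  ultimately show "finite_measure R"
    by (intro finite_measureI) (simp add: A.emeasure_real B.emeasure_real flip: ennreal_plus)
  show "absolutely_continuous R A" "absolutely_continuous R B"
    unfolding absolutely_continuous_def using eR sR assms(3,4)
    by (auto simp: null_sets_def)
qed


lemma emeas_dens: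
  fixes R :: "'a measure" and m :: "'a \<Rightarrow> real"
  assumes "integrable R m" "\<And>x. 0 \<le> m x" "A \<in> sets R"
  shows "emeasure (density R (\<lambda>x. ennreal (m x))) A = ennreal (\<integral>x. m x * indicator A x \<partial>R)"
proof -
  have mm: "m \<in> borel_measurable R" using assms(1) by (rule borel_measurable_integrable)
  have im: "integrable R (\<lambda>x. m x * indicator A x)"
    using integrable_mult_indicator[OF assms(3,1)] by (simp add: mult.commute)
  have "emeasure (density R (\<lambda>x. ennreal (m x))) A = (\<integral>\<^sup>+x. ennreal (m x) * indicator A x \<partial>R)"
    using mm assms(3) by (intro emeasure_density) auto
  also have "\<dots> = (\<integral>\<^sup>+x. ennreal (m x * indicator A x) \<partial>R)"
    by (intro nn_integral_cong) (simp split: split_indicator)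
  also have "\<dots> = ennreal (\<integral>x. m x * indicator A x \<partial>R)"
    by (rule nn_integral_eq_integral[OF im]) (use assms(2) in auto)
  finally show ?thesis .
qed

lemma meas_dens:
  fixes R :: "'a measure" and m :: "'a \<Rightarrow> real"
  assumes "integrable R m" "\<And>x. 0 \<le> m x" "A \<in> sets R"
  shows "measure (density R (\<lambda>x. ennreal (m x))) A = (\<integral>x. m x * indicator A x \<partial>R)"
  using emeas_dens[OF assms] assms(2) by (simp add: measure_def integral_nonneg)

theorem lemma2p3:
  fixes X :: "'a measure" and \<pi>1 \<pi>2 \<mu>1 :: "'a measure" and M :: real
  assumes "\<pi>1 \<in> prob_measures X" and "\<pi>2 \<in> prob_measures X"
    and "M \<ge> 1"
    and "\<mu>1 \<in> N_set X \<pi>1 M"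
  shows "\<exists>\<mu>2 \<in> N_set X \<pi>2 M. tv_dist X \<mu>1 \<mu>2 \<le> M * tv_dist X \<pi>1 \<pi>2"
proof -
  have P1: "prob_space \<pi>1" "sets \<pi>1 = sets X" using assms(1) by (auto simp: prob_measures_def)
  have P2: "prob_space \<pi>2" "sets \<pi>2 = sets X" using assms(2) by (auto simp: prob_measures_def)
  have U: "prob_space \<mu>1" "sets \<mu>1 = sets X" "\<And>A. A \<in> sets X \<Longrightarrow> measure \<mu>1 A \<le> M * measure \<pi>1 A"
    using assms(4) by (auto simp: N_set_def prob_measures_def)
  define R where "R = measure_of (space X) (sets X) (\<lambda>S. emeasure \<mu>1 S + emeasure \<pi>2 S)"
  have fU: "finite_measure \<mu>1" and fP2: "finite_measure \<pi>2"
    using U(1) P2(1) by (simp_all add: prob_space_def)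
  note RR = sum_meas[OF fU fP2 U(2) P2(2), folded R_def]
  interpret R: finite_measure R by (rule RR(1))
  obtain m where m: "m \<in> borel_measurable R" "\<And>x. 0 \<le> m x" "integrable R m"
     "\<And>A. A \<in> sets R \<Longrightarrow> measure \<mu>1 A = (\<integral>x. m x * indicator A x \<partial>R)"
    using dens_real[OF RR(1) U(1) RR(3)] U(2) RR(2) by metis
  obtain p where p: "p \<in> borel_measurable R" "\<And>x. 0 \<le> p x" "integrable R p"
     "\<And>A. A \<in> sets R \<Longrightarrow> measure \<pi>2 A = (\<integral>x. p x * indicator A x \<partial>R)"
    using dens_real[OF RR(1) P2(1) RR(4)] P2(2) RR(2) by metis
  have ind_sp: "(\<integral>x. f x * indicator (space R) x \<partial>R) = integral\<^sup>L R f" for f :: "'a \<Rightarrow> real"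
    by (rule Bochner_Integration.integral_cong) auto
  have spU: "space \<mu>1 = space R" "space \<pi>2 = space R"
    using sets_eq_imp_space_eq U(2) P2(2) RR(2) by metis+
  have im1: "integral\<^sup>L R m = 1"
    using m(4)[of "space R"] ind_sp prob_space.prob_space[OF U(1)] spU by simp
  have ip1: "integral\<^sup>L R p = 1"
    using p(4)[of "space R"] ind_sp prob_space.prob_space[OF P2(1)] spU by simp
  define g where "g x = min (m x) (M * p x)" for x
  define h where "h x = M * p x - g x" for x
  have ig: "integrable R g" unfolding g_def[abs_def]
    using m(3) p(3) by (intro integrable_min) auto
  have ih: "integrable R h" unfolding h_def[abs_def] using ig p(3) by auto
  define e where "e = 1 - integral\<^sup>L R g"
  define H where "H = integral\<^sup>L R h"
  have gm: "g x \<le> m x" "0 \<le> g x" "0 \<le> h x" for x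
    using m(2)[of x] p(2)[of x] assms(3) by (auto simp: g_def h_def)
  have e0: "0 \<le> e" unfolding e_def using integral_mono[OF ig m(3) gm(1)] im1 by simp
  have HH: "H = M - integral\<^sup>L R g" unfolding H_def h_def[abs_def]
    using ig p(3) ip1 by simp
  define c where "c = (if H = 0 then 0 else e / H)"
  have cH: "c * H = e" and c0: "0 \<le> c" and c1: "c \<le> 1"
    using HH assms(3) e0 unfolding c_def e_def by (auto simp: field_simps)
  define m2 where "m2 x = g x + c * h x" for x
  have im2: "integrable R m2" unfolding m2_def[abs_def] using ig ih by auto
  have m20: "0 \<le> m2 x" "g x \<le> m2 x" "m2 x \<le> M * p x" for x
    using gm[of x] c0 c1 mult_left_le_one_le[of "h x" c] by (auto simp: m2_def h_def)
  have I2: "integral\<^sup>L R m2 = 1" unfolding m2_def[abs_def]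
    using ig ih cH e_def H_def by simp
  define \<mu>2 where "\<mu>2 = density R (\<lambda>x. ennreal (m2 x))"
  have sm2: "sets \<mu>2 = sets X" using RR(2) by (simp add: \<mu>2_def)
  have me2: "measure \<mu>2 A = (\<integral>x. m2 x * indicator A x \<partial>R)" if "A \<in> sets R" for A
    unfolding \<mu>2_def by (rule meas_dens[OF im2 m20(1) that])
  have "prob_space \<mu>2"
  proof (rule prob_spaceI)
    have "space \<mu>2 = space R" by (simp add: \<mu>2_def)
    then show "emeasure \<mu>2 (space \<mu>2) = 1"
      using emeas_dens[OF im2 m20(1), of "space R"] ind_sp I2 by (simp add: \<mu>2_def)
  qed
  then have mu2N: "\<mu>2 \<in> N_set X \<pi>2 M"
  proof -
    assume ps: "prob_space \<mu>2"
    have "measure \<mu>2 A \<le> M * measure \<pi>2 A" if A: "A \<in> sets X" for A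
    proof -
      have AR: "A \<in> sets R" using A RR(2) by simp
      have "measure \<mu>2 A = (\<integral>x. m2 x * indicator A x \<partial>R)" by (rule me2[OF AR])
      also have "\<dots> \<le> (\<integral>x. M * (p x * indicator A x) \<partial>R)"
        using integrable_mult_indicator[OF AR im2] integrable_mult_indicator[OF AR p(3)] m20(3)
        by (intro integral_mono) (auto simp: mult.commute split: split_indicator)
      also have "\<dots> = M * measure \<pi>2 A" using p(4)[OF AR] by simp
      finally show ?thesis .
    qed
    then show ?thesis using ps sm2 by (auto simp: N_set_def prob_measures_def)
  qed
  have tv1: "tv_dist X \<mu>1 \<mu>2 \<le> e"
    unfolding tv_dist_def
  proof (rule cSUP_least)
    show "sets X \<noteq> {}" using sets.empty_sets by blast
  next
    fix A assume A: "A \<in> sets X"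
    have AR: "A \<in> sets R" using A RR(2) by simp
    have iA: "integrable R (\<lambda>x. f x * indicator A x)" if "integrable R f" for f :: "'a \<Rightarrow> real"
      using integrable_mult_indicator[OF AR that] by (simp add: mult.commute)
    have d1: "measure \<mu>1 A - measure \<mu>2 A = (\<integral>x. (m x - m2 x) * indicator A x \<partial>R)"
      using m(4)[OF AR] me2[OF AR] iA[OF m(3)] iA[OF im2] by (simp add: left_diff_distrib)
    have "(\<integral>x. (m x - m2 x) * indicator A x \<partial>R) \<le> (\<integral>x. m x - g x \<partial>R)"
      using iA[OF m(3)] iA[OF im2] m(3) ig gm m20
      by (intro integral_mono) (auto simp: left_diff_distrib split: split_indicator)
    also have "\<dots> = e" using m(3) ig im1 by (simp add: e_def)
    finally have u1: "measure \<mu>1 A - measure \<mu>2 A \<le> e" using d1 by simp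
    have d2: "measure \<mu>2 A - measure \<mu>1 A = (\<integral>x. (m2 x - m x) * indicator A x \<partial>R)"
      using m(4)[OF AR] me2[OF AR] iA[OF m(3)] iA[OF im2] by (simp add: left_diff_distrib)
    have "(\<integral>x. (m2 x - m x) * indicator A x \<partial>R) \<le> (\<integral>x. m2 x - g x \<partial>R)"
      using iA[OF m(3)] iA[OF im2] im2 ig gm m20
      by (intro integral_mono) (auto simp: left_diff_distrib split: split_indicator)
    also have "\<dots> = e" using im2 ig I2 by (simp add: e_def)
    finally have u2: "measure \<mu>2 A - measure \<mu>1 A \<le> e" using d2 by simp
    show "\<bar>measure \<mu>1 A - measure \<mu>2 A\<bar> \<le> e" using u1 u2 by linarith
  qed
  define B where "B = {x \<in> space R. M * p x < m x}"
  have BR: "B \<in> sets R" unfolding B_def using m(1) p(1) by measurable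
  have BX: "B \<in> sets X" using BR RR(2) by simp
  have "e = (\<integral>x. m x - g x \<partial>R)" using m(3) ig im1 by (simp add: e_def)
  also have "\<dots> = (\<integral>x. m x * indicator B x - M * (p x * indicator B x) \<partial>R)"
    by (rule Bochner_Integration.integral_cong) (auto simp: g_def B_def split: split_indicator)
  also have "\<dots> = measure \<mu>1 B - M * measure \<pi>2 B"
    using m(4)[OF BR] p(4)[OF BR] integrable_mult_indicator[OF BR m(3)] integrable_mult_indicator[OF BR p(3)]
    by (simp add: mult.commute)
  also have "\<dots> \<le> M * (measure \<pi>1 B - measure \<pi>2 B)"
    using U(3)[OF BX] by (simp add: right_diff_distrib)
  also have "\<dots> \<le> M * tv_dist X \<pi>1 \<pi>2"
  proof -
    have "measure \<pi>1 B - measure \<pi>2 B \<le> \<bar>measure \<pi>1 B - measure \<pi>2 B\<bar>" by simp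
    also have "\<dots> \<le> tv_dist X \<pi>1 \<pi>2" unfolding tv_dist_def
    proof (rule cSUP_upper[OF BX])
      have "\<bar>measure \<pi>1 A - measure \<pi>2 A\<bar> \<le> 1" for A
        using prob_space.prob_le_1[OF P1(1), of A] prob_space.prob_le_1[OF P2(1), of A]
          measure_nonneg[of \<pi>1 A] measure_nonneg[of \<pi>2 A] by linarith
      then show "bdd_above ((\<lambda>A. \<bar>measure \<pi>1 A - measure \<pi>2 A\<bar>) ` sets X)"
        by (intro bdd_aboveI2) 
    qed
    finally show ?thesis using assms(3) by (intro mult_left_mono) auto
  qed
  finally show ?thesis using mu2N tv1 by (intro bexI[of _ \<mu>2]) auto
qed

end
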